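(* Let $X$ be a connected open Riemann surface and let $E\subseteq X$ be a semi-admissible set. Then $E$ satisfies condition $\mathcal{G}$: for every compact set $K\subseteq X$ there exists a compact set $Q$ with $K\subseteq Q\subseteq X$ such that no connected component of the interior $\mathring{E}$ of $E$ intersects both $K$ and $X\setminus Q$.
   Context: A closed set $E \subseteq X$ is called semi-admissible if there exist a locally finite, pairwise disjoint family of compact sets $\{H_\lambda\}_{\lambda\in\Lambda}$ in $X$ and a closed set $S\subseteq X$ with empty interior such that $E = S \cup \bigcup_{\lambda\in\Lambda} H_\lambda$. *)

theory Defs
  imports "HOL-Analysis.Analysis"
begin

definition riemann_surface :: "'a topology \<Rightarrow> ('a set \<times> ('a \<Rightarrow> complex)) set \<Rightarrow> bool" where
  "riemann_surface X A \<longleftrightarrow>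
     Hausdorff_space X \<and>
     (\<forall>(U, \<phi>) \<in> A. openin X U \<and> open (\<phi> ` U) \<and>
        homeomorphic_map (subtopology X U) (top_of_set (\<phi> ` U)) \<phi>) \<and>
     \<Union>(fst ` A) = topspace X \<and>
     (\<forall>(U, \<phi>) \<in> A. \<forall>(V, \<psi>) \<in> A. (\<psi> \<circ> inv_into U \<phi>) holomorphic_on (\<phi> ` (U \<inter> V)))"

text \<open>Connected open (= non-compact) Riemann surface.\<close>
definition connected_open_riemann_surface :: "'a topology \<Rightarrow> ('a set \<times> ('a \<Rightarrow> complex)) set \<Rightarrow> bool" where
  "connected_open_riemann_surface X A \<longleftrightarrow>
     riemann_surface X A \<and> connected_space X \<and> \<not> compact_space X"

definition locally_finite_family :: "'a topology \<Rightarrow> 'a set set \<Rightarrow> bool" where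
  "locally_finite_family X \<H> \<longleftrightarrow>
     (\<forall>x \<in> topspace X. \<exists>V. openin X V \<and> x \<in> V \<and> finite {H \<in> \<H>. H \<inter> V \<noteq> {}})"

definition semi_admissible :: "'a topology \<Rightarrow> 'a set \<Rightarrow> bool" where
  "semi_admissible X E \<longleftrightarrow> closedin X E \<and>
     (\<exists>\<H> S. locally_finite_family X \<H> \<and> pairwise disjnt \<H> \<and> (\<forall>H \<in> \<H>. compactin X H) \<and>
        closedin X S \<and> X interior_of S = {} \<and> E = S \<union> \<Union>\<H>)"

definition condition_G :: "'a topology \<Rightarrow> 'a set \<Rightarrow> bool" where
  "condition_G X E \<longleftrightarrow>
     (\<forall>K. compactin X K \<longrightarrow>
        (\<exists>Q. compactin X Q \<and> K \<subseteq> Q \<and> Q \<subseteq> topspace X \<and>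
           \<not> (\<exists>C \<in> connected_components_of (subtopology X (X interior_of E)).
                 C \<inter> K \<noteq> {} \<and> C \<inter> (topspace X - Q) \<noteq> {})))"

end

theory Submission
  imports Defs
begin

lemma lf_subfamily:
  assumes "locally_finite_family X \<H>" "\<G> \<subseteq> \<H>"
  shows "locally_finite_family X \<G>"
proof -
  { fix x assume "x \<in> topspace X"
    then obtain V where V: "openin X V" "x \<in> V" "finite {H \<in> \<H>. H \<inter> V \<noteq> {}}"
      using assms(1) unfolding locally_finite_family_def by blast
    have "{H \<in> \<G>. H \<inter> V \<noteq> {}} \<subseteq> {H \<in> \<H>. H \<inter> V \<noteq> {}}" using assms(2) by blast
    hence "finite {H \<in> \<G>. H \<inter> V \<noteq> {}}" using V(3) finite_subset by blast
    with V have "\<exists>V. openin X V \<and> x \<in> V \<and> finite {H \<in> \<G>. H \<inter> V \<noteq> {}}" by blast }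
  thus ?thesis unfolding locally_finite_family_def by blast
qed

lemma lf_closed_Union:
  assumes "locally_finite_family X \<H>" "\<And>H. H \<in> \<H> \<Longrightarrow> closedin X H"
  shows "closedin X (\<Union>\<H>)"
proof -
  have sub: "\<Union>\<H> \<subseteq> topspace X" using assms(2) closedin_subset by blast
  have "openin X (topspace X - \<Union>\<H>)"
  proof (subst openin_subopen, intro ballI)
    fix x assume x: "x \<in> topspace X - \<Union>\<H>"
    then obtain V where V: "openin X V" "x \<in> V" "finite {H \<in> \<H>. H \<inter> V \<noteq> {}}"
      using assms(1) unfolding locally_finite_family_def by blast
    let ?F = "{H \<in> \<H>. H \<inter> V \<noteq> {}}"
    have "closedin X (\<Union>?F)" using V(3) assms(2) by (intro closedin_Union) auto
    hence o: "openin X (V - \<Union>?F)" using V(1) by (simp add: openin_diff)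
    have "x \<in> V - \<Union>?F" using x V by auto
    moreover have "V - \<Union>?F \<subseteq> topspace X - \<Union>\<H>" using openin_subset[OF V(1)] by blast
    ultimately show "\<exists>T. openin X T \<and> x \<in> T \<and> T \<subseteq> topspace X - \<Union>\<H>" using o by blast
  qed
  thus ?thesis using sub by (simp add: closedin_def)
qed

lemma lf_compact_finite:
  assumes "locally_finite_family X \<H>" "compactin X K"
  shows "finite {H \<in> \<H>. H \<inter> K \<noteq> {}}"
proof -
  let ?U = "{V. openin X V \<and> finite {H \<in> \<H>. H \<inter> V \<noteq> {}}}"
  have "K \<subseteq> \<Union>?U"
  proof
    fix x assume "x \<in> K"
    hence "x \<in> topspace X" using assms(2) compactin_subset_topspace by blast
    then obtain V where "openin X V" "x \<in> V" "finite {H \<in> \<H>. H \<inter> V \<noteq> {}}"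
      using assms(1) unfolding locally_finite_family_def by blast
    thus "x \<in> \<Union>?U" by blast
  qed
  then obtain F where F: "finite F" "F \<subseteq> ?U" "K \<subseteq> \<Union>F"
    using assms(2) unfolding compactin_def by (metis (no_types, lifting) mem_Collect_eq)
  have "{H \<in> \<H>. H \<inter> K \<noteq> {}} \<subseteq> (\<Union>V\<in>F. {H \<in> \<H>. H \<inter> V \<noteq> {}})" using F(3) by blast
  moreover have "finite (\<Union>V\<in>F. {H \<in> \<H>. H \<inter> V \<noteq> {}})" using F(1,2) by auto
  ultimately show ?thesis using finite_subset by blast
qed

lemma connected_in_one:
  assumes "locally_finite_family X \<H>" "\<And>H. H \<in> \<H> \<Longrightarrow> closedin X H" "pairwise disjnt \<H>"
    and "connectedin X C" "C \<noteq> {}" "C \<subseteq> \<Union>\<H>"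
  shows "\<exists>H\<in>\<H>. C \<subseteq> H"
proof (rule ccontr)
  assume nc: "\<not> (\<exists>H\<in>\<H>. C \<subseteq> H)"
  obtain x where "x \<in> C" using assms(5) by blast
  then obtain H0 where H0: "H0 \<in> \<H>" "x \<in> H0" using assms(6) by blast
  let ?E2 = "\<Union>(\<H> - {H0})"
  have c2: "closedin X ?E2"
    using lf_closed_Union[OF lf_subfamily[OF assms(1)]] assms(2) by blast
  have disj: "H0 \<inter> ?E2 = {}" using assms(3) H0(1) unfolding pairwise_def disjnt_def by blast
  have cov: "C \<subseteq> H0 \<union> ?E2" using assms(6) by blast
  have n1: "H0 \<inter> C \<noteq> {}" using H0 \<open>x \<in> C\<close> by blast
  have n2: "?E2 \<inter> C \<noteq> {}" using nc H0(1) cov by blast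
  show False using assms(4) unfolding connectedin_closedin
    using assms(2)[OF H0(1)] c2 disj cov n1 n2 by blast
qed

theorem proposition4p2:
  fixes X :: "'a topology" and A :: "('a set \<times> ('a \<Rightarrow> complex)) set" and E :: "'a set"
  assumes "connected_open_riemann_surface X A"
    and "semi_admissible X E"
  shows "condition_G X E"
proof -
  have haus: "Hausdorff_space X" using assms(1)
    unfolding connected_open_riemann_surface_def riemann_surface_def by blast
  obtain \<H> S where lf: "locally_finite_family X \<H>" and pd: "pairwise disjnt \<H>"
    and cp: "\<forall>H \<in> \<H>. compactin X H" and cS: "closedin X S" and iS: "X interior_of S = {}"
    and E: "E = S \<union> \<Union>\<H>"
    using assms(2) unfolding semi_admissible_def by blast
  have cl: "\<And>H. H \<in> \<H> \<Longrightarrow> closedin X H" using cp compactin_imp_closedin[OF haus] by blast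
  have cU: "closedin X (\<Union>\<H>)" using lf_closed_Union[OF lf cl] .
  let ?I = "X interior_of E"
  have "openin X (?I - \<Union>\<H>)" using cU by (simp add: openin_diff)
  moreover have "?I - \<Union>\<H> \<subseteq> S" using interior_of_subset[of X E] E by blast
  ultimately have "?I - \<Union>\<H> \<subseteq> X interior_of S" by (rule interior_of_maximal[rotated])
  hence IU: "?I \<subseteq> \<Union>\<H>" using iS by blast
  have comp: "\<exists>H\<in>\<H>. C \<subseteq> H" if "C \<in> connected_components_of (subtopology X ?I)" for C
  proof -
    have "connectedin (subtopology X ?I) C" by (rule connectedin_connected_components_of[OF that])
    hence "connectedin X C" "C \<subseteq> ?I" by (auto simp: connectedin_subtopology)
    moreover have "C \<noteq> {}" using nonempty_connected_components_of[OF that] .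
    ultimately show ?thesis using connected_in_one[OF lf cl pd] IU by blast
  qed
  show ?thesis unfolding condition_G_def
  proof (intro allI impI)
    fix K assume K: "compactin X K"
    let ?F = "{H \<in> \<H>. H \<inter> K \<noteq> {}}"
    define Q where "Q = K \<union> \<Union>?F"
    have fF: "finite ?F" using lf_compact_finite[OF lf K] .
    have cQ: "compactin X Q" unfolding Q_def
      using K fF cp by (intro compactin_Un compactin_Union) auto
    have "Q \<subseteq> topspace X" using cQ compactin_subset_topspace by blast
    moreover have "\<not> (\<exists>C \<in> connected_components_of (subtopology X ?I).
                 C \<inter> K \<noteq> {} \<and> C \<inter> (topspace X - Q) \<noteq> {})"
    proof
      assume "\<exists>C \<in> connected_components_of (subtopology X ?I).
                 C \<inter> K \<noteq> {} \<and> C \<inter> (topspace X - Q) \<noteq> {}"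
      then obtain C where C: "C \<in> connected_components_of (subtopology X ?I)"
        "C \<inter> K \<noteq> {}" "C \<inter> (topspace X - Q) \<noteq> {}" by blast
      obtain H where "H \<in> \<H>" "C \<subseteq> H" using comp[OF C(1)] by blast
      hence "H \<in> ?F" using C(2) by blast
      hence "C \<subseteq> Q" using \<open>C \<subseteq> H\<close> unfolding Q_def by blast
      thus False using C(3) by blast
    qed
    ultimately show "\<exists>Q. compactin X Q \<and> K \<subseteq> Q \<and> Q \<subseteq> topspace X \<and>
           \<not> (\<exists>C \<in> connected_components_of (subtopology X ?I).
                 C \<inter> K \<noteq> {} \<and> C \<inter> (topspace X - Q) \<noteq> {})"
      using cQ unfolding Q_def by blast
  qed
qed

end
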